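(* In the VI setting below, let $u\in\mathbb{R}^n$ and $y=S(u)$. Then $$\partial_BS(u)=\{A(\mathcal A_s\cup\mathcal B_0)^{-1}\chi(\mathcal A_s\cup\mathcal B_0):\ \mathcal B_0\subseteq\mathcal B\},$$ where $\mathcal A_s=\mathcal A_s(u)$ and $\mathcal B=\mathcal B(u)$.
   Context: VI setting: $A\in\mathbb{R}^{n\times n}$ symmetric positive definite, $\|v\|_1=\sum_i|v_i|$. For $u\in\mathbb{R}^n$, $S(u)=y$ is the unique solution of $\langle Ay,v-y\rangle+\|v\|_1-\|y\|_1\ge\langle u,v-y\rangle$ for all $v\in\mathbb{R}^n$; equivalently there is $q\in\mathbb{R}^n$ with $Ay+q=u$, $y_iq_i=|y_i|$, $|q_i|\le1$, and then $q=u-Ay$. $S$ is globally Lipschitz and directionally differentiable. Index sets (depending on $u$ through $y,q$): $\mathcal A_s(u)=\{i:|q_i|<1\}$ (strongly active), $\mathcal I(u)=\{i:y_i\ne0\}$ (inactive), $\mathcal B(u)=\{i:y_i=0,\ |q_i|=1\}$ (biactive). For $\mathcal N\subseteq\{1,\dots,n\}$: $A(\mathcal N)_{ij}=A_{ij}$ if $i,j\notin\mathcal N$, $A(\mathcal N)_{ij}=0$ if $i\ne j$ and ($i\in\mathcal N$ or $j\in\mathcal N$), $A(\mathcal N)_{ii}=1$ if $i\in\mathcal N$; $\chi(\mathcal N)$ is the diagonal matrix with $\chi(\mathcal N)_{ii}=1$ for $i\notin\mathcal N$ and $0$ otherwise ($A(\mathcal N)$ is invertible). $\partial_BS(u)$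 is the Bouligand subdifferential: all limits $\lim_jS'(u_j)$ with $u_j\to u$ and $S$ differentiable at $u_j$. *)

theory Defs
  imports "HOL-Analysis.Analysis"
begin

definition l1norm :: "real^'n \<Rightarrow> real" where
  "l1norm v = (\<Sum>i\<in>UNIV. \<bar>v $ i\<bar>)"

definition spd :: "real^'n^'n \<Rightarrow> bool" where
  "spd A \<longleftrightarrow> transpose A = A \<and> (\<forall>x. x \<noteq> 0 \<longrightarrow> x \<bullet> (A *v x) > 0)"

definition vi_sol :: "real^'n^'n \<Rightarrow> real^'n \<Rightarrow> real^'n" where
  "vi_sol A u = (THE y. \<forall>v. (A *v y) \<bullet> (v - y) + l1norm v - l1norm y \<ge> u \<bullet> (v - y))"

definition vi_q :: "real^'n^'n \<Rightarrow> real^'n \<Rightarrow> real^'n" where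
  "vi_q A u = u - A *v vi_sol A u"

definition strongly_active :: "real^'n^'n \<Rightarrow> real^'n \<Rightarrow> 'n set" where
  "strongly_active A u = {i. \<bar>vi_q A u $ i\<bar> < 1}"

definition inactive_set :: "real^'n^'n \<Rightarrow> real^'n \<Rightarrow> 'n set" where
  "inactive_set A u = {i. vi_sol A u $ i \<noteq> 0}"

definition biactive :: "real^'n^'n \<Rightarrow> real^'n \<Rightarrow> 'n set" where
  "biactive A u = {i. vi_sol A u $ i = 0 \<and> \<bar>vi_q A u $ i\<bar> = 1}"

definition Amod :: "real^'n^'n \<Rightarrow> 'n set \<Rightarrow> real^'n^'n" where
  "Amod A N = (\<chi> i j. if i \<notin> N \<and> j \<notin> N then A $ i $ j
                        else if i = j then 1 else 0)"

definition chimat :: "'n set \<Rightarrow> real^'n^'n" where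
  "chimat N = (\<chi> i j. if i = j \<and> i \<notin> N then 1 else 0)"

definition bouligand_subdiff ::
  "(real^'n \<Rightarrow> real^'m) \<Rightarrow> real^'n \<Rightarrow> (real^'n^'m) set" where
  "bouligand_subdiff f u = {M. \<exists>us D. us \<longlonglongrightarrow> u \<and>
      (\<forall>j. (f has_derivative (\<lambda>h. D j *v h)) (at (us j))) \<and> D \<longlonglongrightarrow> M}"

end

theory Submission
  imports Defs
begin

definition vi :: "real^'n^'n \<Rightarrow> real^'n \<Rightarrow> real^'n \<Rightarrow> bool" where
  "vi A u y \<longleftrightarrow> (\<forall>v. (A *v y) \<bullet> (v - y) + l1norm v - l1norm y \<ge> u \<bullet> (v - y))"

definition kkt :: "real^'n^'n \<Rightarrow> real^'n \<Rightarrow> real^'n \<Rightarrow> bool" where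
  "kkt A u y \<longleftrightarrow> (\<forall>i. \<bar>(u - A *v y) $ i\<bar> \<le> 1 \<and> y $ i * (u - A *v y) $ i = \<bar>y $ i\<bar>)"

lemma inner_cart: "(x::real^'n) \<bullet> y = (\<Sum>i\<in>UNIV. x $ i * y $ i)"
  by (simp add: inner_vec_def)

lemma vi_unique:
  assumes "spd A" "vi A u y1" "vi A u y2" shows "y1 = y2"
proof -
  have a: "(A *v y1) \<bullet> (y2 - y1) + l1norm y2 - l1norm y1 \<ge> u \<bullet> (y2 - y1)"
    using assms(2) unfolding vi_def by blast
  have b: "(A *v y2) \<bullet> (y1 - y2) + l1norm y1 - l1norm y2 \<ge> u \<bullet> (y1 - y2)"
    using assms(3) unfolding vi_def by blast
  have "(y1 - y2) \<bullet> (A *v (y1 - y2)) = (A *v y1) \<bullet> (y1 - y2) - (A *v y2) \<bullet> (y1 - y2)"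
    by (simp add: matrix_vector_mult_diff_distrib inner_commute inner_diff_right)
  also have "\<dots> \<le> 0" using a b
    by (simp add: inner_diff_right inner_diff_left)
  finally show ?thesis using assms(1) unfolding spd_def by (metis eq_iff_diff_eq_0 not_le)
qed

lemma sym_inner: assumes "transpose A = A" shows "x \<bullet> (A *v y) = (A *v x) \<bullet> (y::real^'n)"
proof -
  have "x \<bullet> (A *v y) = (transpose A *v x) \<bullet> y"
    by (simp add: inner_cart matrix_vector_mult_def transpose_def sum_distrib_left sum_distrib_right
        mult_ac) (rule sum.swap)
  thus ?thesis using assms by simp
qed

lemma coercive:
  assumes "spd A" shows "\<exists>c>0. \<forall>x::real^'n. c * (norm x)^2 \<le> x \<bullet> (A *v x)"
proof -
  let ?f = "\<lambda>x::real^'n. x \<bullet> (A *v x)"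
  have cont: "continuous_on UNIV ?f"
    by (intro continuous_intros linear_continuous_on matrix_vector_mul_linear[THEN linear_conv_bounded_linear[THEN iffD1]])
  obtain i :: 'n where True by simp
  have ne: "sphere (0::real^'n) 1 \<noteq> {}"
    using norm_axis_1[of i] by (auto intro!: exI[of _ "axis i 1"] simp: dist_norm)
  obtain x0 where x0: "x0 \<in> sphere 0 1" "\<And>x. x \<in> sphere 0 1 \<Longrightarrow> ?f x0 \<le> ?f x"
    using continuous_attains_inf[OF compact_sphere ne continuous_on_subset[OF cont]] by blast
  have "x0 \<noteq> 0" using x0(1) by auto
  hence c: "?f x0 > 0" using assms unfolding spd_def by blast
  show ?thesis
  proof (intro exI[of _ "?f x0"] conjI c allI)
    fix x :: "real^'n"
    show "?f x0 * (norm x)^2 \<le> ?f x"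
    proof (cases "x = 0")
      case True thus ?thesis by simp
    next
      case False
      let ?x = "(1 / norm x) *\<^sub>R x"
      have "?x \<in> sphere 0 1" using False by (simp add: dist_norm)
      hence "?f x0 \<le> ?f ?x" by (rule x0(2))
      also have "?f ?x = ?f x / (norm x)^2"
        by (simp add: matrix_vector_mult_scaleR power2_eq_square)
      finally show ?thesis using False by (simp add: field_simps)
    qed
  qed
qed


lemma l1norm_nonneg: "l1norm v \<ge> 0"
  unfolding l1norm_def by (simp add: sum_nonneg)

lemma l1norm_convex:
  assumes "0 \<le> t" "t \<le> 1"
  shows "l1norm ((1 - t) *\<^sub>R a + t *\<^sub>R b) \<le> (1 - t) * l1norm a + t * l1norm b"
proof -
  have "\<And>i. \<bar>(1 - t) * a $ i + t * b $ i\<bar> \<le> (1 - t) * \<bar>a $ i\<bar> + t * \<bar>b $ i\<bar>"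
    using assms by (metis abs_mult abs_of_nonneg abs_triangle_ineq diff_ge_0_iff_ge)
  hence "(\<Sum>i\<in>UNIV. \<bar>(1 - t) * a $ i + t * b $ i\<bar>) \<le> (\<Sum>i\<in>UNIV. (1 - t) * \<bar>a $ i\<bar> + t * \<bar>b $ i\<bar>)"
    by (rule sum_mono)
  thus ?thesis unfolding l1norm_def by (simp add: sum.distrib sum_distrib_left)
qed

lemma l1norm_cont: "continuous_on UNIV (l1norm :: real^'n \<Rightarrow> real)"
  unfolding l1norm_def by (intro continuous_intros)

lemma l1norm_le: "l1norm (v::real^'n) \<le> real CARD('n) * norm v"
proof -
  have "l1norm v \<le> (\<Sum>i\<in>(UNIV::'n set). norm v)"
    unfolding l1norm_def by (rule sum_mono) (rule component_le_norm_cart)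
  thus ?thesis by simp
qed

lemma vi_exists:
  assumes "spd A" shows "\<exists>y. vi A u (y::real^'n)"
proof -
  obtain c where c: "c > 0" "\<And>x::real^'n. c * (norm x)^2 \<le> x \<bullet> (A *v x)"
    using coercive[OF assms] by blast
  have symA: "transpose A = A" using assms unfolding spd_def by simp
  define F where "F x = (1/2) * (x \<bullet> (A *v x)) + l1norm x - u \<bullet> x" for x :: "real^'n"
  have contF: "continuous_on UNIV F"
    unfolding F_def
    by (intro continuous_intros l1norm_cont linear_continuous_on
        matrix_vector_mul_linear[THEN linear_conv_bounded_linear[THEN iffD1]])
  define R where "R = 2 * norm u / c"
  have big: "F x > 0" if "norm x > R" for x
  proof -
    have "u \<bullet> x \<le> norm u * norm x" by (rule norm_cauchy_schwarz)
    moreover have "c * (norm x)^2 \<le> x \<bullet> (A *v x)" by (rule c(2))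
    moreover have "norm x * (c/2 * norm x - norm u) > 0"
    proof -
      have "c/2 * norm x > c/2 * R" using that c by simp
      also have "c/2 * R = norm u" unfolding R_def using c by simp
      finally have "c/2 * norm x - norm u > 0" by simp
      moreover have "norm x > 0" using that unfolding R_def using c
        by (metis divide_nonneg_pos norm_ge_zero order.strict_trans1 mult_nonneg_nonneg zero_le_numeral)
      ultimately show ?thesis by simp
    qed
    ultimately show ?thesis unfolding F_def using l1norm_nonneg[of x]
      by (simp add: algebra_simps power2_eq_square)
  qed
  have ne: "cball (0::real^'n) R \<noteq> {}" unfolding R_def using c by (simp add: not_less)
  obtain y where y: "y \<in> cball 0 R" "\<And>x. x \<in> cball 0 R \<Longrightarrow> F y \<le> F x"
    using continuous_attains_inf[OF compact_cball ne continuous_on_subset[OF contF]] by blast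
  have F0: "F 0 = 0" unfolding F_def l1norm_def by simp
  have ymin: "F y \<le> F x" for x
  proof (cases "x \<in> cball 0 R")
    case True thus ?thesis by (rule y(2))
  next
    case False
    hence "F x > 0" by (intro big) (simp add: dist_norm)
    moreover have "F y \<le> F 0" using y(2)[of 0] ne by auto
    ultimately show ?thesis using F0 by simp
  qed
  show ?thesis
  proof (intro exI[of _ y], unfold vi_def, intro allI)
    fix v :: "real^'n"
    define d where "d = v - y"
    define X where "X = (A *v y) \<bullet> d + l1norm v - l1norm y - u \<bullet> d"
    define C where "C = d \<bullet> (A *v d)"
    have C0: "C \<ge> 0" unfolding C_def using c(2)[of d] c(1)
      by (meson mult_nonneg_nonneg less_imp_le zero_le_power2 order_trans)
    have key: "0 \<le> t * X + t^2/2 * C" if t: "0 < t" "t \<le> 1" for t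
    proof -
      have eq: "y + t *\<^sub>R d = (1 - t) *\<^sub>R y + t *\<^sub>R v" unfolding d_def by (simp add: algebra_simps)
      have l1: "l1norm (y + t *\<^sub>R d) \<le> (1 - t) * l1norm y + t * l1norm v"
        unfolding eq using t by (intro l1norm_convex) auto
      have q: "(y + t *\<^sub>R d) \<bullet> (A *v (y + t *\<^sub>R d)) = y \<bullet> (A *v y) + 2 * t * ((A *v y) \<bullet> d) + t^2 * C"
      proof -
        have "A *v (y + t *\<^sub>R d) = A *v y + t *\<^sub>R (A *v d)"
          by (simp add: matrix_vector_right_distrib matrix_vector_mult_scaleR)
        hence "(y + t *\<^sub>R d) \<bullet> (A *v (y + t *\<^sub>R d)) =
           y \<bullet> (A *v y) + t * (y \<bullet> (A *v d)) + t * (d \<bullet> (A *v y)) + t * t * (d \<bullet> (A *v d))"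
          by (simp add: inner_add_left inner_add_right algebra_simps)
        moreover have "y \<bullet> (A *v d) = (A *v y) \<bullet> d" by (rule sym_inner[OF symA])
        moreover have "d \<bullet> (A *v y) = (A *v y) \<bullet> d" by (rule inner_commute)
        ultimately show ?thesis unfolding C_def by (simp add: power2_eq_square)
      qed
      have "F y \<le> F (y + t *\<^sub>R d)" by (rule ymin)
      hence "0 \<le> t * ((A *v y) \<bullet> d) + t^2/2 * C + l1norm (y + t *\<^sub>R d) - l1norm y - t * (u \<bullet> d)"
        unfolding F_def q by (simp add: inner_add_right algebra_simps)
      moreover have "t * X = t * ((A *v y) \<bullet> d) + t * l1norm v - t * l1norm y - t * (u \<bullet> d)"
        unfolding X_def by (simp add: algebra_simps)
      ultimately show ?thesis using l1 by (simp add: algebra_simps)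
    qed
    have "X \<ge> 0"
    proof (rule ccontr)
      assume "\<not> X \<ge> 0"
      hence X: "X < 0" by simp
      define t where "t = min 1 (- X / (C + 1))"
      have t: "0 < t" "t \<le> 1" unfolding t_def using X C0 by (simp_all add: divide_neg_pos)
      have "t * C \<le> (- X / (C + 1)) * C" unfolding t_def using C0
        by (intro mult_right_mono) auto
      also have "\<dots> < - X" using X C0 by (simp add: field_simps)
      finally have "t * C < - X" .
      hence "t * (t * C) < t * (- X)" using t by (intro mult_strict_left_mono) auto
      moreover have "t * X < 0" using X t by (simp add: mult_pos_neg)
      ultimately have "t * X + t^2/2 * C < 0"
        by (simp add: power2_eq_square algebra_simps)
      thus False using key[OF t] by simp
    qed
    thus "u \<bullet> (v - y) \<le> (A *v y) \<bullet> (v - y) + l1norm v - l1norm y"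
      unfolding X_def d_def by simp
  qed
qed

lemma vi_sol_vi: assumes "spd A" shows "vi A u (vi_sol A u)"
proof -
  have "\<exists>!y. vi A u y" using vi_exists[OF assms] vi_unique[OF assms] by blast
  hence "vi A u (THE y. vi A u y)" by (rule theI')
  thus ?thesis unfolding vi_sol_def vi_def .
qed

lemma l1norm_axis: "l1norm (y + t *\<^sub>R axis i 1) = l1norm y - \<bar>y $ i\<bar> + \<bar>y $ i + t\<bar>"
proof -
  have "l1norm (y + t *\<^sub>R axis i 1) = \<bar>y $ i + t\<bar> + (\<Sum>j\<in>UNIV - {i}. \<bar>y $ j\<bar>)"
    unfolding l1norm_def
    by (subst sum.remove[of _ i]) (auto simp: axis_def intro!: sum.cong)
  moreover have "l1norm y = \<bar>y $ i\<bar> + (\<Sum>j\<in>UNIV - {i}. \<bar>y $ j\<bar>)"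
    unfolding l1norm_def by (subst sum.remove[of _ i]) auto
  ultimately show ?thesis by simp
qed

lemma vi_kkt: assumes "vi A u y" shows "kkt A u y"
  unfolding kkt_def
proof
  fix i
  define q where "q = u - A *v y"
  have P: "t * q $ i \<le> \<bar>y $ i + t\<bar> - \<bar>y $ i\<bar>" for t
  proof -
    have "u \<bullet> (t *\<^sub>R axis i 1) \<le> (A *v y) \<bullet> (t *\<^sub>R axis i 1) + l1norm (y + t *\<^sub>R axis i 1) - l1norm y"
      using assms unfolding vi_def by (metis add_diff_cancel_left')
    thus ?thesis unfolding l1norm_axis q_def by (simp add: inner_axis algebra_simps)
  qed
  have "\<bar>q $ i\<bar> \<le> 1 \<and> y $ i * q $ i = \<bar>y $ i\<bar>"
  proof (cases "y $ i" "0::real" rule: linorder_cases)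
    case less
    have a: "- y $ i * q $ i \<le> y $ i" using P[of "- y $ i"] less by simp
    have "q $ i \<le> -1"
    proof (rule ccontr)
      assume "\<not> q $ i \<le> -1"
      hence "- y $ i * q $ i > - y $ i * (-1)" using less by (intro mult_strict_left_mono) auto
      thus False using a by simp
    qed
    moreover have "- q $ i \<le> 1" using P[of "-1"] less by simp
    ultimately have "q $ i = -1" by simp
    thus ?thesis using less by simp
  next
    case equal
    then show ?thesis using P[of 1] P[of "-1"] by simp
  next
    case greater
    have a: "- y $ i * q $ i \<le> - y $ i" using P[of "- y $ i"] greater by simp
    have "q $ i \<ge> 1"
    proof (rule ccontr)
      assume "\<not> q $ i \<ge> 1"
      hence "y $ i * q $ i < y $ i * 1" using greater by (intro mult_strict_left_mono) auto
      thus False using a by simp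
    qed
    moreover have "q $ i \<le> 1" using P[of 1] greater by simp
    ultimately show ?thesis using greater by simp
  qed
  thus "\<bar>(u - A *v y) $ i\<bar> \<le> 1 \<and> y $ i * (u - A *v y) $ i = \<bar>y $ i\<bar>" unfolding q_def .
qed

lemma kkt_vi: assumes "kkt A u y" shows "vi A u y"
  unfolding vi_def
proof
  fix v
  define q where "q = u - A *v y"
  have "\<And>i. q $ i * v $ i - q $ i * y $ i \<le> \<bar>v $ i\<bar> - \<bar>y $ i\<bar>"
  proof -
    fix i
    have h: "\<bar>q $ i\<bar> \<le> 1" "y $ i * q $ i = \<bar>y $ i\<bar>" using assms unfolding kkt_def q_def by auto
    have "q $ i * v $ i \<le> \<bar>q $ i * v $ i\<bar>" by simp
    also have "\<dots> \<le> \<bar>v $ i\<bar>" using h(1) by (simp add: abs_mult mult_left_le_one_le)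
    finally show "q $ i * v $ i - q $ i * y $ i \<le> \<bar>v $ i\<bar> - \<bar>y $ i\<bar>" using h(2) by (simp add: mult.commute)
  qed
  hence "(\<Sum>i\<in>UNIV. q $ i * v $ i - q $ i * y $ i) \<le> (\<Sum>i\<in>UNIV. \<bar>v $ i\<bar> - \<bar>y $ i\<bar>)"
    by (rule sum_mono)
  hence "q \<bullet> (v - y) \<le> l1norm v - l1norm y"
    unfolding inner_cart l1norm_def by (simp add: sum_subtractf algebra_simps)
  thus "u \<bullet> (v - y) \<le> (A *v y) \<bullet> (v - y) + l1norm v - l1norm y"
    unfolding q_def by (simp add: inner_diff_left)
qed

lemma kkt_sol: assumes "spd A" "kkt A u y" shows "vi_sol A u = y"
  using vi_unique[OF assms(1) vi_sol_vi[OF assms(1)] kkt_vi[OF assms(2)]] .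

lemma sol_kkt: assumes "spd A" shows "kkt A u (vi_sol A u)"
  using vi_kkt[OF vi_sol_vi[OF assms]] .

lemma sol_lip: assumes "spd A"
  shows "\<exists>K. \<forall>u1 u2. norm (vi_sol A u1 - vi_sol A u2) \<le> K * norm (u1 - u2)"
proof -
  obtain c where c: "c > 0" "\<And>x::real^'a. c * (norm x)^2 \<le> x \<bullet> (A *v x)"
    using coercive[OF assms] by blast
  have "norm (vi_sol A u1 - vi_sol A u2) \<le> (1/c) * norm (u1 - u2)" for u1 u2
  proof -
    define y1 where "y1 = vi_sol A u1"
    define y2 where "y2 = vi_sol A u2"
    define d where "d = y1 - y2"
    have a: "(A *v y1) \<bullet> (y2 - y1) + l1norm y2 - l1norm y1 \<ge> u1 \<bullet> (y2 - y1)"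
      using vi_sol_vi[OF assms, of u1] unfolding vi_def y1_def by blast
    have b: "(A *v y2) \<bullet> (y1 - y2) + l1norm y1 - l1norm y2 \<ge> u2 \<bullet> (y1 - y2)"
      using vi_sol_vi[OF assms, of u2] unfolding vi_def y2_def by blast
    have "d \<bullet> (A *v d) = (A *v y1) \<bullet> d - (A *v y2) \<bullet> d"
      unfolding d_def by (simp add: matrix_vector_mult_diff_distrib inner_commute inner_diff_right)
    also have "\<dots> \<le> (u1 - u2) \<bullet> d" using a b unfolding d_def
      by (simp add: inner_diff_right inner_diff_left)
    also have "\<dots> \<le> norm (u1 - u2) * norm d" by (rule norm_cauchy_schwarz)
    finally have "c * (norm d)^2 \<le> norm (u1 - u2) * norm d" using c(2)[of d] by linarith
    hence "c * norm d \<le> norm (u1 - u2)"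
      by (cases "norm d = 0") (auto simp: power2_eq_square)
    thus ?thesis unfolding d_def y1_def y2_def using c(1) by (simp add: field_simps)
  qed
  thus ?thesis by blast
qed

lemma sol_tendsto: assumes "spd A" "us \<longlonglongrightarrow> u"
  shows "(\<lambda>j. vi_sol A (us j)) \<longlonglongrightarrow> vi_sol A u"
proof -
  obtain K where K: "\<And>u1 u2. norm (vi_sol A u1 - vi_sol A u2) \<le> K * norm (u1 - u2)"
    using sol_lip[OF assms(1)] by blast
  have g: "(\<lambda>j. K * norm (us j - u)) \<longlonglongrightarrow> 0"
  proof -
    have "(\<lambda>j. us j - u) \<longlonglongrightarrow> 0"
      using assms(2) by (simp add: LIM_zero_iff)
    hence "(\<lambda>j. norm (us j - u)) \<longlonglongrightarrow> 0" by (simp add: tendsto_norm_zero_iff)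
    hence "(\<lambda>j. K * norm (us j - u)) \<longlonglongrightarrow> K * 0" by (intro tendsto_mult tendsto_const)
    thus ?thesis by simp
  qed
  have ev: "\<forall>\<^sub>F j in sequentially. norm (vi_sol A (us j) - vi_sol A u) \<le> K * norm (us j - u)"
    by (rule always_eventually) (intro allI K)
  have "(\<lambda>j. vi_sol A (us j) - vi_sol A u) \<longlonglongrightarrow> 0"
    by (rule Lim_null_comparison[OF ev g])
  thus ?thesis by (simp add: LIM_zero_iff)
qed

lemma amod_N: "i \<in> N \<Longrightarrow> (Amod A N *v x) $ i = x $ i"
proof -
  assume i: "i \<in> N"
  have "(Amod A N *v x) $ i = (\<Sum>j\<in>UNIV. (if i = j then 1 else 0) * x $ j)"
    unfolding matrix_vector_mult_def Amod_def using i by (auto intro!: sum.cong)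
  also have "\<dots> = x $ i" by (simp add: mult_delta_left)
  finally show ?thesis .
qed

lemma chimat_mv: "(chimat N *v r) $ i = (if i \<in> N then 0 else r $ i)"
proof -
  have "(chimat N *v r) $ i = (if i \<in> N then 0 else (\<Sum>j\<in>UNIV. (if i = j then 1 else 0) * r $ j))"
    unfolding matrix_vector_mult_def chimat_def by (auto intro!: sum.cong)
  also have "\<dots> = (if i \<in> N then 0 else r $ i)" by (simp add: mult_delta_left)
  finally show ?thesis .
qed

lemma amod_mv: assumes "\<forall>j\<in>N. x $ j = 0" shows "Amod A N *v x = chimat N *v (A *v x)"
proof (subst vec_eq_iff, intro allI)
  fix i
  show "(Amod A N *v x) $ i = (chimat N *v (A *v x)) $ i"
  proof (cases "i \<in> N")
    case True thus ?thesis using assms by (simp add: amod_N chimat_mv)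
  next
    case False
    have "(Amod A N *v x) $ i = (\<Sum>j\<in>UNIV. A $ i $ j * x $ j)"
      unfolding matrix_vector_mult_def Amod_def using False assms by (auto intro!: sum.cong)
    also have "\<dots> = (A *v x) $ i" by (simp add: matrix_vector_mult_def)
    also have "\<dots> = (chimat N *v (A *v x)) $ i" using False by (simp add: chimat_mv)
    finally show ?thesis .
  qed
qed

lemma amod_invertible: assumes "spd A" shows "invertible (Amod A N)"
proof -
  have inj: "x = 0" if x: "Amod A N *v x = 0" for x
  proof -
    have xN: "\<forall>j\<in>N. x $ j = 0" using x amod_N[of _ N A x] by simp
    hence "chimat N *v (A *v x) = 0" using x amod_mv[of N x A] by simp
    hence Ax: "\<And>i. i \<notin> N \<Longrightarrow> (A *v x) $ i = 0" by (metis chimat_mv zero_index)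
    have "x \<bullet> (A *v x) = (\<Sum>i\<in>UNIV. x $ i * (A *v x) $ i)" by (rule inner_cart)
    also have "\<dots> = 0" using xN Ax by (intro sum.neutral) auto
    finally show "x = 0" using assms unfolding spd_def by (metis less_irrefl)
  qed
  obtain B where B: "B ** Amod A N = mat 1" using matrix_left_invertible_ker inj by blast
  hence "Amod A N ** B = mat 1" using matrix_left_right_inverse by blast
  thus ?thesis using B unfolding invertible_def by blast
qed

lemma matrix_inv_props:
  assumes "invertible (M :: real^'n^'n)"
  shows "M ** matrix_inv M = mat 1" "matrix_inv M ** M = mat 1"
proof -
  have "\<exists>A'. M ** A' = mat 1 \<and> A' ** M = mat 1" using assms unfolding invertible_def .
  hence "M ** matrix_inv M = mat 1 \<and> matrix_inv M ** M = mat 1"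
    unfolding matrix_inv_def by (rule someI_ex)
  thus "M ** matrix_inv M = mat 1" "matrix_inv M ** M = mat 1" by auto
qed

definition MN :: "real^'n^'n \<Rightarrow> 'n set \<Rightarrow> real^'n^'n" where
  "MN A N = matrix_inv (Amod A N) ** chimat N"

lemma MN_eq: assumes "spd A" shows "Amod A N *v (MN A N *v p) = chimat N *v p"
  unfolding MN_def using matrix_inv_props(1)[OF amod_invertible[OF assms, of N]]
  by (simp add: matrix_vector_mul_assoc matrix_mul_assoc)

lemma MN_N: assumes "spd A" "i \<in> N" shows "(MN A N *v p) $ i = 0"
  using MN_eq[OF assms(1), of N p] amod_N[OF assms(2), of A] chimat_mv[of N p i] assms(2)
  by metis

lemma MN_A: assumes "spd A" "i \<notin> N" shows "(A *v (MN A N *v p)) $ i = p $ i"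
proof -
  have "\<forall>j\<in>N. (MN A N *v p) $ j = 0" using MN_N[OF assms(1)] by blast
  hence "chimat N *v (A *v (MN A N *v p)) = chimat N *v p"
    using MN_eq[OF assms(1), of N p] amod_mv by metis
  hence "(chimat N *v (A *v (MN A N *v p))) $ i = (chimat N *v p) $ i" by simp
  thus ?thesis using assms(2) by (simp add: chimat_mv)
qed

lemma MN_Ax: assumes "spd A" "\<forall>j\<in>N. x $ j = 0" shows "MN A N *v (A *v x) = x"
proof -
  have "Amod A N *v x = chimat N *v (A *v x)" by (rule amod_mv[OF assms(2)])
  hence "matrix_inv (Amod A N) *v (Amod A N *v x) = MN A N *v (A *v x)"
    unfolding MN_def by (simp add: matrix_vector_mul_assoc matrix_mul_assoc)
  thus ?thesis using matrix_inv_props(2)[OF amod_invertible[OF assms(1), of N]]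
    by (simp add: matrix_vector_mul_assoc)
qed

lemma MN_e: assumes "\<forall>j. j \<notin> N \<longrightarrow> e $ j = 0" shows "MN A N *v e = 0"
proof -
  have "chimat N *v e = 0" using assms by (simp add: vec_eq_iff chimat_mv)
  thus ?thesis unfolding MN_def by (simp add: matrix_vector_mul_assoc[symmetric])
qed

lemma kkt_comp: assumes "kkt A u y"
  shows "\<bar>(u - A *v y) $ i\<bar> \<le> 1" "y $ i * (u - A *v y) $ i = \<bar>y $ i\<bar>"
  using assms unfolding kkt_def by auto

lemma kkt_zero: assumes "kkt A u y" "\<bar>(u - A *v y) $ i\<bar> < 1" shows "y $ i = 0"
proof (rule ccontr)
  assume ne: "y $ i \<noteq> 0"
  have "\<bar>y $ i\<bar> = \<bar>y $ i * (u - A *v y) $ i\<bar>" using kkt_comp(2)[OF assms(1), of i]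
    by simp
  also have "\<dots> = \<bar>y $ i\<bar> * \<bar>(u - A *v y) $ i\<bar>" by (rule abs_mult)
  also have "\<dots> < \<bar>y $ i\<bar>" using ne assms(2) by (simp add: mult_strict_left_mono[of _ 1, simplified])
  finally show False by simp
qed

lemma perturb:
  assumes spd: "spd A"
    and y: "y = vi_sol A u" and q: "q = u - A *v y"
    and N1: "\<forall>i. \<bar>q $ i\<bar> < 1 \<longrightarrow> i \<in> N" and N2: "\<forall>i\<in>N. y $ i = 0"
    and m: "m = MN A N *v p" and z: "z = p - A *v m"
    and c1: "\<forall>i\<in>N. \<bar>q $ i + z $ i\<bar> \<le> 1"
    and c2: "\<forall>i. i \<notin> N \<longrightarrow> 0 \<le> q $ i * (y $ i + m $ i)"
  shows "vi_sol A (u + p) = y + m"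
proof (rule kkt_sol[OF spd])
  have K: "kkt A u y" using sol_kkt[OF spd] y by simp
  have eq: "u + p - A *v (y + m) = q + z"
    unfolding q z by (simp add: matrix_vector_right_distrib algebra_simps)
  show "kkt A (u + p) (y + m)"
    unfolding kkt_def eq
  proof
    fix i
    show "\<bar>(q + z) $ i\<bar> \<le> 1 \<and> (y + m) $ i * (q + z) $ i = \<bar>(y + m) $ i\<bar>"
    proof (cases "i \<in> N")
      case True
      have "m $ i = 0" using MN_N[OF spd True] m by simp
      thus ?thesis using True c1 N2 by simp
    next
      case False
      have zi: "z $ i = 0" using MN_A[OF spd False, of p] unfolding z m by simp
      have "\<bar>q $ i\<bar> \<le> 1" using kkt_comp(1)[OF K] q by simp
      moreover have "\<not> \<bar>q $ i\<bar> < 1" using N1 False by blast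
      ultimately have q1: "\<bar>q $ i\<bar> = 1" by simp
      have pos: "0 \<le> q $ i * (y $ i + m $ i)" using c2 False by blast
      have "\<bar>y $ i + m $ i\<bar> = \<bar>(y $ i + m $ i) * q $ i\<bar>" using q1 by (simp add: abs_mult)
      also have "\<dots> = (y $ i + m $ i) * q $ i" using pos by (simp add: mult.commute)
      finally show ?thesis using zi q1 by simp
    qed
  qed
qed

lemma vi_q_eq: "vi_q A u = u - A *v vi_sol A u" unfolding vi_q_def ..

lemma Z_split:
  assumes "spd A" "vi_sol A u $ i = 0"
  shows "i \<in> strongly_active A u \<or> i \<in> biactive A u"
  using kkt_comp(1)[OF sol_kkt[OF assms(1)], of u i] assms(2)
  unfolding strongly_active_def biactive_def vi_q_def by auto

lemma As_zero: assumes "spd A" "i \<in> strongly_active A u" shows "vi_sol A u $ i = 0"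
  using kkt_zero[OF sol_kkt[OF assms(1)], of u i] assms(2)
  unfolding strongly_active_def vi_q_def by auto

lemma mv_tendsto: "(f \<longlongrightarrow> a) F \<Longrightarrow> ((\<lambda>x. (M::real^'n^'m) *v f x) \<longlongrightarrow> M *v a) F"
  by (rule bounded_linear.tendsto[OF matrix_vector_mul_bounded_linear])

lemma local_diff:
  assumes spd: "spd A" and y: "y = vi_sol A v" and q: "q = v - A *v y"
    and hN: "\<forall>i\<in>N. y $ i = 0 \<and> \<bar>q $ i\<bar> < 1" and hN': "\<forall>i. i \<notin> N \<longrightarrow> y $ i \<noteq> 0"
  shows "(vi_sol A has_derivative (\<lambda>h. MN A N *v h)) (at v)"
proof -
  define M where "M = MN A N"
  have K: "kkt A v y" using sol_kkt[OF spd] y by simp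
  have tm: "((\<lambda>x. M *v (x - v)) \<longlongrightarrow> 0) (at v)"
    using mv_tendsto[OF tendsto_diff[OF tendsto_ident_at tendsto_const, of v v], of M] by simp
  have tz: "((\<lambda>x. (x - v) - A *v (M *v (x - v))) \<longlongrightarrow> 0) (at v)"
    using tendsto_diff[OF tendsto_diff[OF tendsto_ident_at tendsto_const, of v v] mv_tendsto[OF tm, of A]]
    by simp
  have ev: "\<forall>\<^sub>F x in at v. \<forall>i. (i \<in> N \<longrightarrow> \<bar>q $ i + ((x - v) - A *v (M *v (x - v))) $ i\<bar> \<le> 1) \<and>
       (i \<notin> N \<longrightarrow> 0 \<le> q $ i * (y $ i + (M *v (x - v)) $ i))"
  proof (rule eventually_all_finite)
    fix i
    show "\<forall>\<^sub>F x in at v. (i \<in> N \<longrightarrow> \<bar>q $ i + ((x - v) - A *v (M *v (x - v))) $ i\<bar> \<le> 1) \<and>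
       (i \<notin> N \<longrightarrow> 0 \<le> q $ i * (y $ i + (M *v (x - v)) $ i))"
    proof (cases "i \<in> N")
      case True
      have "((\<lambda>x. \<bar>q $ i + ((x - v) - A *v (M *v (x - v))) $ i\<bar>) \<longlongrightarrow> \<bar>q $ i + 0 $ i\<bar>) (at v)"
        by (intro tendsto_intros tz)
      hence "\<forall>\<^sub>F x in at v. \<bar>q $ i + ((x - v) - A *v (M *v (x - v))) $ i\<bar> < 1"
        using hN True by (intro order_tendstoD(2)) auto
      thus ?thesis using True by (auto elim: eventually_mono)
    next
      case False
      have "((\<lambda>x. q $ i * (y $ i + (M *v (x - v)) $ i)) \<longlongrightarrow> q $ i * (y $ i + 0 $ i)) (at v)"
        by (intro tendsto_intros tm)
      moreover have "q $ i * (y $ i + 0 $ i) > 0"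
        using kkt_comp(2)[OF K, of i] hN' False q by (simp add: mult.commute)
      ultimately have "\<forall>\<^sub>F x in at v. q $ i * (y $ i + (M *v (x - v))$ i) > 0"
        by (intro order_tendstoD(1)) auto
      thus ?thesis using False by (auto elim: eventually_mono)
    qed
  qed
  have N1: "\<forall>i. \<bar>q $ i\<bar> < 1 \<longrightarrow> i \<in> N"
    using kkt_zero[OF K] hN' q by blast
  have ev2: "\<forall>\<^sub>F x in at v. y + M *v (x - v) = vi_sol A x"
  proof (rule eventually_mono[OF ev])
    fix x assume h: "\<forall>i. (i \<in> N \<longrightarrow> \<bar>q $ i + ((x - v) - A *v (M *v (x - v))) $ i\<bar> \<le> 1) \<and>
       (i \<notin> N \<longrightarrow> 0 \<le> q $ i * (y $ i + (M *v (x - v)) $ i))"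
    have "vi_sol A (v + (x - v)) = y + MN A N *v (x - v)"
      by (rule perturb[OF spd y q N1 _ refl refl]) (use hN h in \<open>auto simp: M_def\<close>)
    thus "y + M *v (x - v) = vi_sol A x" by (simp add: M_def)
  qed
  have d: "((\<lambda>x. y + M *v (x - v)) has_derivative (\<lambda>h. M *v h)) (at v)"
    by (auto intro!: derivative_eq_intros bounded_linear.has_derivative[OF matrix_vector_mul_bounded_linear])
  have "(vi_sol A has_derivative (\<lambda>h. M *v h)) (at v within UNIV)"
    by (rule has_derivative_transform_eventually[OF d])
      (use ev2 y in auto)
  thus ?thesis unfolding M_def by simp
qed

lemma supset:
  assumes spd: "spd A" and B0: "B0 \<subseteq> biactive A u"
  shows "MN A (strongly_active A u \<union> B0) \<in> bouligand_subdiff (vi_sol A) u"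
proof -
  define y where "y = vi_sol A u"
  define q where "q = u - A *v y"
  define N where "N = strongly_active A u \<union> B0"
  define B where "B = biactive A u"
  define d where "d = (\<chi> i. if i \<in> B - B0 then q $ i else 0)"
  define e where "e = (\<chi> i. if i \<in> B0 then q $ i else 0)"
  define w where "w = A *v d - e"
  have K: "kkt A u y" using sol_kkt[OF spd] y_def by simp
  have As: "i \<in> strongly_active A u \<longleftrightarrow> \<bar>q $ i\<bar> < 1" for i
    unfolding strongly_active_def vi_q_def q_def y_def by simp
  have Bd: "i \<in> B \<longleftrightarrow> y $ i = 0 \<and> \<bar>q $ i\<bar> = 1" for i
    unfolding B_def biactive_def vi_q_def q_def y_def by simp
  have B0B: "i \<in> B0 \<Longrightarrow> i \<in> B" for i using B0 B_def by blast
  have dN: "\<forall>j\<in>N. d $ j = 0" unfolding d_def N_def using As Bd by auto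
  have eN: "\<forall>j. j \<notin> N \<longrightarrow> e $ j = 0" unfolding e_def N_def by auto
  have Mw: "MN A N *v (t *\<^sub>R w) = t *\<^sub>R d" for t
    unfolding w_def using MN_Ax[OF spd dN] MN_e[OF eN]
    by (simp add: matrix_vector_mult_scaleR matrix_vector_mult_diff_distrib)
  have yzero: "y $ i = 0" if "i \<in> N" for i
    using that unfolding N_def using As_zero[OF spd, of i u] Bd B0B y_def by auto
  have main: "vi_sol A (u + t *\<^sub>R w) = y + t *\<^sub>R d" if t: "0 < t" "t < 1" for t
  proof -
    have z: "t *\<^sub>R w - A *v (t *\<^sub>R d) = - t *\<^sub>R e"
      unfolding w_def by (simp add: matrix_vector_mult_scaleR algebra_simps)
    show ?thesis
    proof (rule perturb[OF spd y_def q_def _ _ Mw[symmetric] refl])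
      show "\<forall>i. \<bar>q $ i\<bar> < 1 \<longrightarrow> i \<in> N" using As unfolding N_def by blast
      show "\<forall>i\<in>N. y $ i = 0" using yzero by blast
      show "\<forall>i\<in>N. \<bar>q $ i + (t *\<^sub>R w - A *v (t *\<^sub>R d)) $ i\<bar> \<le> 1"
      proof
        fix i assume i: "i \<in> N"
        show "\<bar>q $ i + (t *\<^sub>R w - A *v (t *\<^sub>R d)) $ i\<bar> \<le> 1"
        proof (cases "i \<in> B0")
          case True
          hence q1: "\<bar>q $ i\<bar> = 1" using Bd B0B by blast
          have "q $ i + (t *\<^sub>R w - A *v (t *\<^sub>R d)) $ i = (1 - t) * q $ i"
            unfolding z e_def using True by (simp add: algebra_simps)
          thus ?thesis using q1 t by (simp add: abs_mult)
        next
          case False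
          hence "\<bar>q $ i\<bar> < 1" using i As unfolding N_def by auto
          thus ?thesis unfolding z e_def using False by simp
        qed
      qed
      show "\<forall>i. i \<notin> N \<longrightarrow> 0 \<le> q $ i * (y $ i + (t *\<^sub>R d) $ i)"
      proof (intro allI impI)
        fix i assume i: "i \<notin> N"
        show "0 \<le> q $ i * (y $ i + (t *\<^sub>R d) $ i)"
        proof (cases "i \<in> B")
          case True
          hence "y $ i = 0" using Bd by blast
          moreover have "i \<in> B - B0" using True i unfolding N_def by blast
          ultimately show ?thesis unfolding d_def using t by (simp add: algebra_simps)
        next
          case False
          have "q $ i * y $ i = \<bar>y $ i\<bar>" using kkt_comp(2)[OF K, of i] q_def by (simp add: mult.commute)
          thus ?thesis unfolding d_def using False by simp
        qed
      qed
    qed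
  qed
  have deriv: "(vi_sol A has_derivative (\<lambda>h. MN A N *v h)) (at (u + t *\<^sub>R w))"
    if t: "0 < t" "t < 1" for t
  proof (rule local_diff[OF spd])
    show "y + t *\<^sub>R d = vi_sol A (u + t *\<^sub>R w)" using main[OF t] by simp
    show "u + t *\<^sub>R w - A *v (y + t *\<^sub>R d) = u + t *\<^sub>R w - A *v (y + t *\<^sub>R d)" ..
    have qe: "u + t *\<^sub>R w - A *v (y + t *\<^sub>R d) = q - t *\<^sub>R e"
      unfolding w_def q_def by (simp add: matrix_vector_right_distrib matrix_vector_mult_scaleR algebra_simps)
    show "\<forall>i\<in>N. (y + t *\<^sub>R d) $ i = 0 \<and> \<bar>(u + t *\<^sub>R w - A *v (y + t *\<^sub>R d)) $ i\<bar> < 1"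
    proof
      fix i assume i: "i \<in> N"
      have "(y + t *\<^sub>R d) $ i = 0" using yzero[OF i] dN i by simp
      moreover have "\<bar>(q - t *\<^sub>R e) $ i\<bar> < 1"
      proof (cases "i \<in> B0")
        case True
        hence q1: "\<bar>q $ i\<bar> = 1" using Bd B0B by blast
        have "(q - t *\<^sub>R e) $ i = (1 - t) * q $ i" unfolding e_def using True by (simp add: algebra_simps)
        thus ?thesis using q1 t by (simp add: abs_mult)
      next
        case False
        hence "\<bar>q $ i\<bar> < 1" using i As unfolding N_def by auto
        thus ?thesis unfolding e_def using False by simp
      qed
      ultimately show "(y + t *\<^sub>R d) $ i = 0 \<and> \<bar>(u + t *\<^sub>R w - A *v (y + t *\<^sub>R d)) $ i\<bar> < 1"
        unfolding qe by simp
    qed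
    show "\<forall>i. i \<notin> N \<longrightarrow> (y + t *\<^sub>R d) $ i \<noteq> 0"
    proof (intro allI impI)
      fix i assume i: "i \<notin> N"
      show "(y + t *\<^sub>R d) $ i \<noteq> 0"
      proof (cases "i \<in> B")
        case True
        hence "y $ i = 0" "\<bar>q $ i\<bar> = 1" using Bd by auto
        moreover have "i \<in> B - B0" using True i unfolding N_def by blast
        ultimately show ?thesis unfolding d_def using t by auto
      next
        case False
        have "i \<notin> strongly_active A u" using i N_def by blast
        hence "y $ i \<noteq> 0" using Z_split[OF spd, of u i] False B_def y_def by blast
        thus ?thesis unfolding d_def using False by simp
      qed
    qed
  qed
  define us where "us k = u + (1 / (real k + 2)) *\<^sub>R w" for k :: nat
  have "(\<lambda>k. 1 / real (k + 2)) \<longlonglongrightarrow> 0"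
    by (rule LIMSEQ_ignore_initial_segment[OF lim_1_over_n])
  hence "(\<lambda>k. 1 / (real k + 2)) \<longlonglongrightarrow> 0" by (simp add: add.commute)
  hence "(\<lambda>k. u + (1 / (real k + 2)) *\<^sub>R w) \<longlonglongrightarrow> u + 0 *\<^sub>R w"
    by (intro tendsto_intros)
  hence lim: "us \<longlonglongrightarrow> u" unfolding us_def by simp
  have dk: "\<forall>k. (vi_sol A has_derivative (\<lambda>h. MN A N *v h)) (at (us k))"
    unfolding us_def by (intro allI deriv) auto
  show ?thesis unfolding bouligand_subdiff_def N_def[symmetric]
    using lim dk by (intro CollectI exI[of _ us] exI[of _ "\<lambda>k. MN A N"]) auto
qed

lemma dir_unique:
  fixes f :: "real^'n \<Rightarrow> real^'m"
  assumes df: "(f has_derivative (\<lambda>h. D *v h)) (at v)"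
    and ev: "\<forall>\<^sub>F t in at_right 0. f (v + t *\<^sub>R w) = f v + t *\<^sub>R c"
  shows "D *v w = c"
proof -
  have df': "(f has_derivative (\<lambda>h. D *v h)) (at (v + 0 *\<^sub>R w))" using df by simp
  have g0: "((\<lambda>t::real. v + t *\<^sub>R w) has_derivative (\<lambda>t. t *\<^sub>R w)) (at 0 within {0..1})"
    by (auto intro!: derivative_eq_intros)
  have g: "((\<lambda>t. f (v + t *\<^sub>R w)) has_derivative (\<lambda>t. D *v (t *\<^sub>R w))) (at 0 within {0..1})"
    using has_derivative_compose[OF g0 df'] by simp
  have ev': "\<forall>\<^sub>F t in at 0 within {0..1}. f (v + t *\<^sub>R w) = f v + t *\<^sub>R c"
    using ev at_within_Icc_at_right[of "0::real" 1] by simp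
  have h: "((\<lambda>t. f v + t *\<^sub>R c) has_derivative (\<lambda>t. D *v (t *\<^sub>R w))) (at 0 within {0..1})"
    by (rule has_derivative_transform_eventually[OF g ev']) auto
  hence h1: "((\<lambda>t. f v + t *\<^sub>R c) has_vector_derivative (D *v w)) (at 0 within {0..1})"
    unfolding has_vector_derivative_def by (simp add: matrix_vector_mult_scaleR)
  have h2: "((\<lambda>t. f v + t *\<^sub>R c) has_vector_derivative c) (at 0 within {0..1})"
    unfolding has_vector_derivative_def by (auto intro!: derivative_eq_intros)
  have nb: "at (0::real) within {0..1} \<noteq> bot"
    using at_within_Icc_at_right[of "0::real" 1] by simp
  show ?thesis by (rule vector_derivative_unique_within[OF nb h1 h2])
qed

lemma deriv_form:
  assumes spd: "spd A" and df: "(vi_sol A has_derivative (\<lambda>h. D *v h)) (at v)"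
  shows "D = MN A {i. vi_sol A v $ i = 0}"
proof -
  define y where "y = vi_sol A v"
  define q where "q = v - A *v y"
  define N where "N = {i. vi_sol A v $ i = 0}"
  define M where "M = MN A N"
  define zf where "zf w = w - A *v (M *v w)" for w
  have K: "kkt A v y" using sol_kkt[OF spd] y_def by simp
  have zlin: "zf (a *\<^sub>R w1 + w2) = a *\<^sub>R zf w1 + zf w2" for a w1 w2
    unfolding zf_def by (simp add: matrix_vector_right_distrib matrix_vector_mult_scaleR algebra_simps)
  have Mt: "M *v (t *\<^sub>R w) = t *\<^sub>R (M *v w)" for t w by (simp add: matrix_vector_mult_scaleR)
  have zt: "t *\<^sub>R w - A *v (M *v (t *\<^sub>R w)) = t *\<^sub>R zf w" for t w
    unfolding zf_def by (simp add: matrix_vector_mult_scaleR algebra_simps)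
  have N1: "\<forall>i. \<bar>q $ i\<bar> < 1 \<longrightarrow> i \<in> N"
    using kkt_zero[OF K] unfolding N_def q_def y_def by blast
  have N2: "\<forall>i\<in>N. y $ i = 0" unfolding N_def y_def by simp
  have dir: "D *v w = M *v w" if cw: "\<forall>i\<in>N. \<bar>q $ i\<bar> = 1 \<longrightarrow> q $ i * zf w $ i < 0" for w
  proof (rule dir_unique[OF df])
    have ev: "\<forall>\<^sub>F t in at_right 0. \<forall>i. (i \<in> N \<longrightarrow> \<bar>q $ i + t * zf w $ i\<bar> \<le> 1) \<and>
        (i \<notin> N \<longrightarrow> 0 \<le> q $ i * (y $ i + t * (M *v w) $ i))"
    proof (rule eventually_all_finite)
      fix i
      have tt: "((\<lambda>t::real. t) \<longlongrightarrow> 0) (at_right 0)" by (rule tendsto_ident_at)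
      show "\<forall>\<^sub>F t in at_right 0. (i \<in> N \<longrightarrow> \<bar>q $ i + t * zf w $ i\<bar> \<le> 1) \<and>
        (i \<notin> N \<longrightarrow> 0 \<le> q $ i * (y $ i + t * (M *v w) $ i))"
      proof (cases "i \<in> N")
        case True
        have qle: "\<bar>q $ i\<bar> \<le> 1" using kkt_comp(1)[OF K] q_def by simp
        show ?thesis
        proof (cases "\<bar>q $ i\<bar> < 1")
          case True
          have "((\<lambda>t. \<bar>q $ i + t * zf w $ i\<bar>) \<longlongrightarrow> \<bar>q $ i + 0 * zf w $ i\<bar>) (at_right 0)"
            by (intro tendsto_intros tt)
          hence "\<forall>\<^sub>F t in at_right 0. \<bar>q $ i + t * zf w $ i\<bar> < 1"
            using True by (intro order_tendstoD(2)) auto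
          thus ?thesis using \<open>i \<in> N\<close> by (auto elim: eventually_mono)
        next
          case False
          hence q1: "\<bar>q $ i\<bar> = 1" using qle by simp
          hence neg: "q $ i * zf w $ i < 0" using cw \<open>i \<in> N\<close> by blast
          have qq: "q $ i * q $ i = 1" using q1 by (metis abs_mult_self_eq mult_1_right)
          have "((\<lambda>t. t * (- (q $ i * zf w $ i))) \<longlongrightarrow> 0 * (- (q $ i * zf w $ i))) (at_right 0)"
            by (intro tendsto_intros tt)
          hence "\<forall>\<^sub>F t in at_right 0. t * (- (q $ i * zf w $ i)) < 1"
            by (intro order_tendstoD(2)) auto
          hence "\<forall>\<^sub>F t in at_right 0. t * (- (q $ i * zf w $ i)) < 1 \<and> 0 < t"
            using eventually_at_right_less[of "0::real"] by (auto elim: eventually_elim2)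
          thus ?thesis
          proof (rule eventually_mono)
            fix t assume t: "t * (- (q $ i * zf w $ i)) < 1 \<and> 0 < t"
            have "\<bar>q $ i + t * zf w $ i\<bar> = \<bar>q $ i\<bar> * \<bar>q $ i + t * zf w $ i\<bar>" using q1 by simp
            also have "\<dots> = \<bar>q $ i * q $ i + t * (q $ i * zf w $ i)\<bar>"
              by (simp add: abs_mult[symmetric] algebra_simps)
            also have "\<dots> = \<bar>1 + t * (q $ i * zf w $ i)\<bar>" using qq by simp
            also have "\<dots> \<le> 1"
            proof -
              have "t * (q $ i * zf w $ i) < 0" using t neg by (simp add: mult_pos_neg)
              moreover have "t * (q $ i * zf w $ i) > -1" using t by simp
              ultimately show ?thesis by simp
            qed
            finally show "(i \<in> N \<longrightarrow> \<bar>q $ i + t * zf w $ i\<bar> \<le> 1) \<and>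
              (i \<notin> N \<longrightarrow> 0 \<le> q $ i * (y $ i + t * (M *v w) $ i))" using \<open>i \<in> N\<close> by simp
          qed
        qed
      next
        case False
        have "((\<lambda>t. q $ i * (y $ i + t * (M *v w) $ i)) \<longlongrightarrow> q $ i * (y $ i + 0 * (M *v w) $ i)) (at_right 0)"
          by (intro tendsto_intros tt)
        moreover have "q $ i * (y $ i + 0 * (M *v w) $ i) > 0"
          using kkt_comp(2)[OF K, of i] False q_def unfolding N_def y_def by (simp add: mult.commute)
        ultimately have "\<forall>\<^sub>F t in at_right 0. q $ i * (y $ i + t * (M *v w) $ i) > 0"
          by (intro order_tendstoD(1)) auto
        thus ?thesis using False by (auto elim: eventually_mono)
      qed
    qed
    show "\<forall>\<^sub>F t in at_right 0. vi_sol A (v + t *\<^sub>R w) = vi_sol A v + t *\<^sub>R (M *v w)"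
    proof (rule eventually_mono[OF ev])
      fix t assume h: "\<forall>i. (i \<in> N \<longrightarrow> \<bar>q $ i + t * zf w $ i\<bar> \<le> 1) \<and>
        (i \<notin> N \<longrightarrow> 0 \<le> q $ i * (y $ i + t * (M *v w) $ i))"
      have "vi_sol A (v + t *\<^sub>R w) = y + MN A N *v (t *\<^sub>R w)"
      proof (rule perturb[OF spd y_def q_def N1 N2 refl refl])
        show "\<forall>i\<in>N. \<bar>q $ i + (t *\<^sub>R w - A *v (MN A N *v (t *\<^sub>R w))) $ i\<bar> \<le> 1"
          using h zt[of t w] unfolding M_def by simp
        show "\<forall>i. i \<notin> N \<longrightarrow> 0 \<le> q $ i * (y $ i + (MN A N *v (t *\<^sub>R w)) $ i)"
          using h Mt[of t w] unfolding M_def by simp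
      qed
      thus "vi_sol A (v + t *\<^sub>R w) = vi_sol A v + t *\<^sub>R (M *v w)"
        using Mt unfolding M_def y_def by simp
    qed
  qed
  define e where "e = (\<chi> i. if i \<in> N then q $ i else 0)"
  have Me: "M *v e = 0" unfolding M_def by (rule MN_e) (simp add: e_def)
  have "M *v (- e) = 0" using Me matrix_vector_mult_scaleR[of M "-1" e] by simp
  hence ze: "zf (- e) = - e" unfolding zf_def by simp
  have eq_all: "D *v h = M *v h" for h
  proof -
    define lam where "lam = norm (zf h) + 1"
    have c0: "\<forall>i\<in>N. \<bar>q $ i\<bar> = 1 \<longrightarrow> q $ i * zf (- e) $ i < 0"
    proof (intro ballI impI)
      fix i assume "i \<in> N" "\<bar>q $ i\<bar> = 1"
      hence "q $ i * q $ i = 1" by (metis abs_mult_self_eq mult_1_right)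
      moreover have "zf (- e) $ i = - (e $ i)" by (simp add: ze)
      moreover have "e $ i = q $ i" using \<open>i \<in> N\<close> by (simp add: e_def)
      ultimately show "q $ i * zf (- e) $ i < 0" by simp
    qed
    have c1: "\<forall>i\<in>N. \<bar>q $ i\<bar> = 1 \<longrightarrow> q $ i * zf (lam *\<^sub>R (- e) + h) $ i < 0"
    proof (intro ballI impI)
      fix i assume i: "i \<in> N" "\<bar>q $ i\<bar> = 1"
      hence qq: "q $ i * q $ i = 1" by (metis abs_mult_self_eq mult_1_right)
      have "q $ i * zf h $ i \<le> \<bar>q $ i * zf h $ i\<bar>" by simp
      also have "\<dots> = \<bar>zf h $ i\<bar>" using i by (simp add: abs_mult)
      also have "\<dots> \<le> norm (zf h)" by (rule component_le_norm_cart)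
      finally have a: "q $ i * zf h $ i \<le> norm (zf h)" .
      have ei: "e $ i = q $ i" using i by (simp add: e_def)
      have "q $ i * zf (lam *\<^sub>R (- e) + h) $ i = - lam * (q $ i * e $ i) + q $ i * zf h $ i"
        unfolding zlin ze by (simp add: algebra_simps)
      hence "q $ i * zf (lam *\<^sub>R (- e) + h) $ i = - lam * (q $ i * q $ i) + q $ i * zf h $ i"
        using ei by simp
      also have "\<dots> = - lam + q $ i * zf h $ i" using qq by simp
      finally show "q $ i * zf (lam *\<^sub>R (- e) + h) $ i < 0" using a unfolding lam_def by simp
    qed
    have "D *v (lam *\<^sub>R (- e) + h) = M *v (lam *\<^sub>R (- e) + h)" by (rule dir[OF c1])
    moreover have "D *v (- e) = M *v (- e)" by (rule dir[OF c0])
    moreover have "D *v (lam *\<^sub>R (- e) + h) = lam *\<^sub>R (D *v (- e)) + D *v h"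
      by (simp only: matrix_vector_right_distrib matrix_vector_mult_scaleR)
    moreover have "M *v (lam *\<^sub>R (- e) + h) = lam *\<^sub>R (M *v (- e)) + M *v h"
      by (simp only: matrix_vector_right_distrib matrix_vector_mult_scaleR)
    ultimately show ?thesis by simp
  qed
  show ?thesis unfolding M_def[symmetric] N_def[symmetric] using eq_all by (simp add: matrix_eq)
qed

theorem theorem4p1:
  fixes A :: "real^'n^'n" and u :: "real^'n"
  assumes "spd A"
  shows "bouligand_subdiff (vi_sol A) u =
    {matrix_inv (Amod A (strongly_active A u \<union> B0)) ** chimat (strongly_active A u \<union> B0)
      | B0. B0 \<subseteq> biactive A u}"
proof -
  note spd = assms
  define As where "As = strongly_active A u"
  define B where "B = biactive A u"
  define y where "y = vi_sol A u"
  define q where "q = u - A *v y"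
  have rhs: "{matrix_inv (Amod A (As \<union> B0)) ** chimat (As \<union> B0) | B0. B0 \<subseteq> B}
      = (\<lambda>B0. MN A (As \<union> B0)) ` Pow B"
    unfolding MN_def by auto
  show ?thesis
    unfolding As_def[symmetric] B_def[symmetric] rhs
  proof
    show "(\<lambda>B0. MN A (As \<union> B0)) ` Pow B \<subseteq> bouligand_subdiff (vi_sol A) u"
      using supset[OF spd] unfolding As_def B_def by blast
  next
    show "bouligand_subdiff (vi_sol A) u \<subseteq> (\<lambda>B0. MN A (As \<union> B0)) ` Pow B"
    proof
      fix M assume "M \<in> bouligand_subdiff (vi_sol A) u"
      then obtain us D where us: "us \<longlonglongrightarrow> u"
        and dD: "\<And>j. (vi_sol A has_derivative (\<lambda>h. D j *v h)) (at (us j))"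
        and DM: "D \<longlonglongrightarrow> M"
        unfolding bouligand_subdiff_def by blast
      define Z where "Z j = {i. vi_sol A (us j) $ i = 0}" for j
      have DZ: "D j = MN A (Z j)" for j unfolding Z_def by (rule deriv_form[OF spd dD])
      have ys: "(\<lambda>j. vi_sol A (us j)) \<longlonglongrightarrow> y" unfolding y_def by (rule sol_tendsto[OF spd us])
      have qs: "(\<lambda>j. us j - A *v vi_sol A (us j)) \<longlonglongrightarrow> q"
        unfolding q_def by (intro tendsto_diff us mv_tendsto ys)
      have ev: "\<forall>\<^sub>F j in sequentially. \<forall>i. (i \<in> As \<longrightarrow> i \<in> Z j) \<and> (i \<in> Z j \<longrightarrow> i \<in> As \<union> B)"
      proof (rule eventually_all_finite)
        fix i
        show "\<forall>\<^sub>F j in sequentially. (i \<in> As \<longrightarrow> i \<in> Z j) \<and> (i \<in> Z j \<longrightarrow> i \<in> As \<union> B)"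
        proof (cases "i \<in> As")
          case True
          hence "\<bar>q $ i\<bar> < 1" unfolding As_def strongly_active_def vi_q_def q_def y_def by simp
          moreover have "((\<lambda>j. \<bar>(us j - A *v vi_sol A (us j)) $ i\<bar>) \<longlongrightarrow> \<bar>q $ i\<bar>) sequentially"
            by (intro tendsto_intros qs)
          ultimately have "\<forall>\<^sub>F j in sequentially. \<bar>(us j - A *v vi_sol A (us j)) $ i\<bar> < 1"
            by (intro order_tendstoD(2))
          thus ?thesis
          proof (rule eventually_mono)
            fix j assume "\<bar>(us j - A *v vi_sol A (us j)) $ i\<bar> < 1"
            hence "vi_sol A (us j) $ i = 0" by (rule kkt_zero[OF sol_kkt[OF spd]])
            thus "(i \<in> As \<longrightarrow> i \<in> Z j) \<and> (i \<in> Z j \<longrightarrow> i \<in> As \<union> B)"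
              using True unfolding Z_def by simp
          qed
        next
          case False
          show ?thesis
          proof (cases "y $ i = 0")
            case True
            hence "i \<in> As \<union> B" using Z_split[OF spd, of u i] unfolding As_def B_def y_def by blast
            thus ?thesis using False by simp
          next
            case yne: False
            have "((\<lambda>j. \<bar>vi_sol A (us j) $ i\<bar>) \<longlongrightarrow> \<bar>y $ i\<bar>) sequentially"
              by (intro tendsto_intros ys)
            moreover have "\<bar>y $ i\<bar> > 0" using yne by simp
            ultimately have "\<forall>\<^sub>F j in sequentially. \<bar>vi_sol A (us j) $ i\<bar> > 0"
              by (intro order_tendstoD(1))
            thus ?thesis
              by (rule eventually_mono) (use False in \<open>auto simp: Z_def\<close>)
          qed
        qed
      qed
      have evD: "\<forall>\<^sub>F j in sequentially. D j \<in> (\<lambda>B0. MN A (As \<union> B0)) ` Pow B"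
      proof (rule eventually_mono[OF ev])
        fix j assume h: "\<forall>i. (i \<in> As \<longrightarrow> i \<in> Z j) \<and> (i \<in> Z j \<longrightarrow> i \<in> As \<union> B)"
        have z1: "Z j = As \<union> (Z j - As)" using h by blast
        have z2: "Z j - As \<in> Pow B" using h by blast
        show "D j \<in> (\<lambda>B0. MN A (As \<union> B0)) ` Pow B" unfolding DZ
          by (rule image_eqI[OF _ z2]) (rule arg_cong[where f="MN A", OF z1])
      qed
      show "M \<in> (\<lambda>B0. MN A (As \<union> B0)) ` Pow B"
        by (rule Lim_in_closed_set[OF finite_imp_closed evD _ DM]) auto
    qed
  qed
qed

end
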